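(* Let $\mathtt{Hol}_{\mathfrak T}$ be a holistic model and $\gamma$ a formula. (1) If $\lnot\beta$ is a subformula of $\gamma$, then $\mathtt{Hol}^\gamma_{\mathfrak T}(\lnot\beta)={}^{\mathfrak D}\mathtt{NOT}^{(At(\beta))}_{\mathfrak T}(\mathtt{Hol}^\gamma_{\mathfrak T}(\beta))$. (2) If $\sqrt{id}\,\beta$ is a subformula of $\gamma$, then $\mathtt{Hol}^\gamma_{\mathfrak T}(\sqrt{id}\,\beta)={}^{\mathfrak D}\sqrt{\mathtt I}^{(At(\beta))}_{\mathfrak T}(\mathtt{Hol}^\gamma_{\mathfrak T}(\beta))$. (3) If $\sqrt{\lnot}\,\beta$ is a subformula of $\gamma$, then $\mathtt{Hol}^\gamma_{\mathfrak T}(\sqrt{\lnot}\,\beta)={}^{\mathfrak D}\sqrt{\mathtt{NOT}}^{(At(\beta))}_{\mathfrak T}(\mathtt{Hol}^\gamma_{\mathfrak T}(\beta))$.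
   Context: Hilbert spaces and states: for $n\ge1$, $\mathcal H^{(n)}=(\mathbb C^2)^{\otimes n}$ with canonical basis $|x_1,\dots,x_n\rangle=|x_1\rangle\otimes\cdots\otimes|x_n\rangle$ ($x_i\in\{0,1\}$, $|0\rangle=(1,0)$, $|1\rangle=(0,1)$); $\mathfrak D(\mathcal H^{(n)})$ is the set of density operators (qumixes) on $\mathcal H^{(n)}$. A truth-perspective is a unitary operator $\mathfrak T$ on $\mathbb C^2$, and $\mathfrak T^{(n)}=\mathfrak T\otimes\cdots\otimes\mathfrak T$ ($n$ factors). $^{\mathfrak T}P_1^{(n)}$ (resp. $^{\mathfrak T}P_0^{(n)}$) is the projection onto the span of the vectors $\mathfrak T^{(n)}|x_1,\dots,x_n\rangle$ with $x_n=1$ (resp. $x_n=0$). For $\rho$ on $\mathcal H^{(n_1)}\otimes\cdots\otimes\mathcal H^{(n_t)}$, $Red^{(j_1,\dots,j_s)}_{[n_1,\dots,n_t]}(\rho)$ is the reduced state (partial trace over all factors other than $j_1,\dots,j_s$). Gates (defined on the canonical basis and extended linearly): $\mathtt{NOT}^{(n)}|x_1,\dots,x_n\rangle=|x_1,\dots,x_{n-1}\rangle\otimes|1-x_n\rangle$; $\sqrt{\mathtt I}^{(n)}|x_1,\dots,x_n\rangle=|x_1,\dots,x_{n-1}\rangle\otimes\frac1{\sqrt2}((-1)^{x_n}|x_n\rangle+|1-x_n\rangle)$; $\sqrt{\mathtt{NOT}}^{(n)}|x_1,\dots,x_n\rangle=|x_1,\dots,x_{n-1}\rangle\otimes(\frac{1-i}{2}|x_n\rangle+\frac{1+i}{2}|1-x_n\rangle)$;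 $\mathtt{XOR}^{(m,n)}|x_1..x_m,y_1..y_n\rangle=|x_1..x_m,y_1..y_{n-1}\rangle\otimes|x_m\oplus y_n\rangle$; Toffoli $\mathtt T^{(m,n,p)}|x_1..x_m,y_1..y_n,z_1..z_p\rangle=|x_1..x_m,y_1..y_n,z_1..z_{p-1}\rangle\otimes|x_my_n\oplus z_p\rangle$ ($\oplus$ = addition mod 2). For a gate $G$ on $\mathcal H^{(n)}$: $G_{\mathfrak T}=\mathfrak T^{(n)}G\,\mathfrak T^{(n)\dagger}$ and $^{\mathfrak D}G_{\mathfrak T}(\rho)=G_{\mathfrak T}\rho G_{\mathfrak T}^\dagger$. Language: formulas are built from atomic formulas (among them two distinguished atoms $\mathbf t,\mathbf f$) with unary connectives $\lnot,\sqrt{id},\sqrt{\lnot}$, binary $\uplus$ and ternary $\intercal$. $At(\alpha)$ is the number of occurrences of atomic formulas in $\alpha$. Syntactical tree of $\alpha$: $Level_1^\alpha=(\alpha)$; $Level_{i+1}^\alpha$ is obtained from $Level_i^\alpha=(\beta_1,\dots,\beta_r)$ by replacing each non-atomic $\beta_j$ by the sequence of its immediate subformulas (its argument(s) in order) and keeping each atomic $\beta_j$; the last level $Level_h^\alpha$ ($h$ = height) lists all atomic occurrences. Then $\mathcal H^{(At(\alpha))}=\mathcal H^{(At(\beta_1))}\otimes\cdots\otimes\mathcal H^{(At(\beta_r))}$. The $\mathfrak T$-gate $G^\alpha_{\mathfrak T(i)}$ ($1\le i<h$) is the tensor product over $j$ of: the identity of $\mathbb C^2$ if $\beta_j$ is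 atomic; $\mathtt{NOT}_{\mathfrak T}^{(At(\beta))}$, $\sqrt{\mathtt I}_{\mathfrak T}^{(At(\beta))}$, $\sqrt{\mathtt{NOT}}_{\mathfrak T}^{(At(\beta))}$ if $\beta_j$ is $\lnot\beta$, $\sqrt{id}\beta$, $\sqrt\lnot\beta$; $\mathtt{XOR}_{\mathfrak T}^{(At(\beta'),At(\beta''))}$ if $\beta_j=\beta'\uplus\beta''$; $\mathtt T_{\mathfrak T}^{(At(\beta'),At(\beta''),At(\beta'''))}$ if $\beta_j=\intercal(\beta',\beta'',\beta''')$. Holistic model: a map $\mathtt{Hol}_{\mathfrak T}$ assigning to each level $Level_i^\alpha$ of each formula $\alpha$ a qumix $\mathtt{Hol}_{\mathfrak T}(Level_i^\alpha)\in\mathfrak D(\mathcal H^{(At(\alpha))})$ such that (a) $\mathtt{Hol}_{\mathfrak T}(Level_i^\alpha)={}^{\mathfrak D}G^\alpha_{\mathfrak T(i)}(\mathtt{Hol}_{\mathfrak T}(Level_{i+1}^\alpha))$ for $1\le i<h$; (b) (normality) for each formula $\gamma$, where the contextual meaning of the occurrence $\beta_j$ in $Level_i^\gamma=(\beta_1,\dots,\beta_r)$ is $Red^{(j)}_{[At(\beta_1),\dots,At(\beta_r)]}(\mathtt{Hol}_{\mathfrak T}(Level_i^\gamma))$, all occurrences of the same subformula $\beta$ in the syntactical tree of $\gamma$ have the same contextual meaning, denoted $\mathtt{Hol}^\gamma_{\mathfrak T}(\beta)$; (c) every occurrence of $\mathbf f$ (resp. $\mathbf t$) has contextual meaning $^{\mathfrak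 T}P_0^{(1)}$ (resp. $^{\mathfrak T}P_1^{(1)}$). *)

theory Defs
  imports "Jordan_Normal_Form.Matrix"
begin

text \<open>The canonical basis vector |x_1,...,x_n> corresponds to the index
  x_1 2^(n-1) + ... + x_n 2^0 (x_1 most significant), so that the Kronecker
  product below is the tensor product with the first factor most significant.\<close>

definition adj :: "complex mat \<Rightarrow> complex mat" where
  "adj A = mat (dim_col A) (dim_row A) (\<lambda>(i,j). cnj (A $$ (j,i)))"

definition kron :: "complex mat \<Rightarrow> complex mat \<Rightarrow> complex mat" where
  "kron A B = mat (dim_row A * dim_row B) (dim_col A * dim_col B)
     (\<lambda>(i,j). A $$ (i div dim_row B, j div dim_col B) * B $$ (i mod dim_row B, j mod dim_col B))"

fun kron_list :: "complex mat list \<Rightarrow> complex mat" where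
  "kron_list [] = 1\<^sub>m 1"
| "kron_list (A # As) = kron A (kron_list As)"

definition kron_pow :: "complex mat \<Rightarrow> nat \<Rightarrow> complex mat" where
  "kron_pow T n = kron_list (replicate n T)"

definition unitary_op :: "nat \<Rightarrow> complex mat \<Rightarrow> bool" where
  "unitary_op d U \<longleftrightarrow> U \<in> carrier_mat d d \<and> adj U * U = 1\<^sub>m d \<and> U * adj U = 1\<^sub>m d"

definition truth_perspective :: "complex mat \<Rightarrow> bool" where
  "truth_perspective T \<longleftrightarrow> unitary_op 2 T"

definition density :: "nat \<Rightarrow> complex mat \<Rightarrow> bool" where
  "density d \<rho> \<longleftrightarrow> \<rho> \<in> carrier_mat d d \<and> adj \<rho> = \<rho> \<and>
     (\<forall>v :: nat \<Rightarrow> complex. 0 \<le> Re (\<Sum>i<d. \<Sum>j<d. cnj (v i) * \<rho> $$ (i,j) * v j)) \<and>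
     (\<Sum>i<d. \<rho> $$ (i,i)) = 1"

text \<open>Reduced state Red^(j)_[d_0,...,d_(r-1)] (factor j, 0-based; dimensions of the factors)\<close>
definition Red :: "nat \<Rightarrow> nat list \<Rightarrow> complex mat \<Rightarrow> complex mat" where
  "Red j ds \<rho> =
     (let L = prod_list (take j ds); d = ds ! j; R = prod_list (drop (Suc j) ds) in
      mat d d (\<lambda>(a,b). \<Sum>l<L. \<Sum>r<R. \<rho> $$ ((l * d + a) * R + r, (l * d + b) * R + r)))"

definition Dgate :: "complex mat \<Rightarrow> complex mat \<Rightarrow> complex mat" where
  "Dgate G \<rho> = G * \<rho> * adj G"

definition conjT :: "complex mat \<Rightarrow> nat \<Rightarrow> complex mat \<Rightarrow> complex mat" where
  "conjT T n G = kron_pow T n * G * adj (kron_pow T n)"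

section \<open>Gates (defined on the canonical basis: column c is the image of basis vector c)\<close>

definition perm_gate :: "nat \<Rightarrow> (nat \<Rightarrow> nat) \<Rightarrow> complex mat" where
  "perm_gate N f = mat N N (\<lambda>(r,c). if r = f c then 1 else 0)"

text \<open>flipping the last qubit x_n (the least significant bit)\<close>
definition flip_last :: "nat \<Rightarrow> nat" where
  "flip_last c = (if even c then c + 1 else c - 1)"

definition NOT_gate :: "nat \<Rightarrow> complex mat" where
  "NOT_gate n = perm_gate (2 ^ n) flip_last"

definition SqrtI_gate :: "nat \<Rightarrow> complex mat" where
  "SqrtI_gate n = mat (2 ^ n) (2 ^ n) (\<lambda>(r,c).
     if r = c then (if even c then 1 else -1) / complex_of_real (sqrt 2)
     else if r = flip_last c then 1 / complex_of_real (sqrt 2) else 0)"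

definition SqrtNOT_gate :: "nat \<Rightarrow> complex mat" where
  "SqrtNOT_gate n = mat (2 ^ n) (2 ^ n) (\<lambda>(r,c).
     if r = c then (1 - \<i>) / 2
     else if r = flip_last c then (1 + \<i>) / 2 else 0)"

definition XOR_gate :: "nat \<Rightarrow> nat \<Rightarrow> complex mat" where
  "XOR_gate m n = perm_gate (2 ^ (m + n)) (\<lambda>c.
     let a = c div 2 ^ n; b = c mod 2 ^ n in
     a * 2 ^ n + (b - b mod 2 + (a mod 2 + b mod 2) mod 2))"

definition Toffoli_gate :: "nat \<Rightarrow> nat \<Rightarrow> nat \<Rightarrow> complex mat" where
  "Toffoli_gate m n p = perm_gate (2 ^ (m + n + p)) (\<lambda>c.
     let a = c div 2 ^ (n + p); b = (c div 2 ^ p) mod 2 ^ n; z = c mod 2 ^ p in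
     a * 2 ^ (n + p) + b * 2 ^ p + (z - z mod 2 + ((a mod 2) * (b mod 2) + z mod 2) mod 2))"

definition P1 :: "complex mat \<Rightarrow> nat \<Rightarrow> complex mat" where
  "P1 T n = kron_pow T n * mat (2 ^ n) (2 ^ n) (\<lambda>(r,c). if r = c \<and> odd c then 1 else 0)
            * adj (kron_pow T n)"

definition P0 :: "complex mat \<Rightarrow> nat \<Rightarrow> complex mat" where
  "P0 T n = kron_pow T n * mat (2 ^ n) (2 ^ n) (\<lambda>(r,c). if r = c \<and> even c then 1 else 0)
            * adj (kron_pow T n)"

datatype form =
    Atom nat
  | TT
  | FF
  | Neg form
  | SqId form
  | SqNeg form
  | Xor form form
  | Toff form form form

fun atomic :: "form \<Rightarrow> bool" where
  "atomic (Atom _) = True"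
| "atomic TT = True"
| "atomic FF = True"
| "atomic _ = False"

fun At :: "form \<Rightarrow> nat" where
  "At (Atom _) = 1"
| "At TT = 1"
| "At FF = 1"
| "At (Neg b) = At b"
| "At (SqId b) = At b"
| "At (SqNeg b) = At b"
| "At (Xor b c) = At b + At c"
| "At (Toff b c d) = At b + At c + At d"

fun subformulas :: "form \<Rightarrow> form set" where
  "subformulas (Neg b) = insert (Neg b) (subformulas b)"
| "subformulas (SqId b) = insert (SqId b) (subformulas b)"
| "subformulas (SqNeg b) = insert (SqNeg b) (subformulas b)"
| "subformulas (Xor b c) = insert (Xor b c) (subformulas b \<union> subformulas c)"
| "subformulas (Toff b c d) = insert (Toff b c d) (subformulas b \<union> subformulas c \<union> subformulas d)"
| "subformulas a = {a}"

fun expand :: "form \<Rightarrow> form list" where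
  "expand (Neg b) = [b]"
| "expand (SqId b) = [b]"
| "expand (SqNeg b) = [b]"
| "expand (Xor b c) = [b, c]"
| "expand (Toff b c d) = [b, c, d]"
| "expand a = [a]"

text \<open>Level_i^\<alpha> for i \<ge> 1 (1-based as in the paper)\<close>
definition level :: "form \<Rightarrow> nat \<Rightarrow> form list" where
  "level \<alpha> i = ((\<lambda>l. concat (map expand l)) ^^ (i - 1)) [\<alpha>]"

fun height :: "form \<Rightarrow> nat" where
  "height (Neg b) = Suc (height b)"
| "height (SqId b) = Suc (height b)"
| "height (SqNeg b) = Suc (height b)"
| "height (Xor b c) = Suc (max (height b) (height c))"
| "height (Toff b c d) = Suc (max (max (height b) (height c)) (height d))"
| "height a = 1"

text \<open>the factor of the T-gate G^\<alpha>_T(i) contributed by one item \<beta>_j of a level\<close>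
fun gate_item :: "complex mat \<Rightarrow> form \<Rightarrow> complex mat" where
  "gate_item T (Neg b) = conjT T (At b) (NOT_gate (At b))"
| "gate_item T (SqId b) = conjT T (At b) (SqrtI_gate (At b))"
| "gate_item T (SqNeg b) = conjT T (At b) (SqrtNOT_gate (At b))"
| "gate_item T (Xor b c) = conjT T (At b + At c) (XOR_gate (At b) (At c))"
| "gate_item T (Toff b c d) = conjT T (At b + At c + At d) (Toffoli_gate (At b) (At c) (At d))"
| "gate_item T a = 1\<^sub>m 2"

definition level_gate :: "complex mat \<Rightarrow> form \<Rightarrow> nat \<Rightarrow> complex mat" where
  "level_gate T \<alpha> i = kron_list (map (gate_item T) (level \<alpha> i))"

text \<open>the j-th item (0-based) of Level_i^\<alpha> is an occurrence of \<beta>\<close>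
definition occ :: "form \<Rightarrow> nat \<Rightarrow> nat \<Rightarrow> form \<Rightarrow> bool" where
  "occ \<alpha> i j \<beta> \<longleftrightarrow> 1 \<le> i \<and> i \<le> height \<alpha> \<and> j < length (level \<alpha> i) \<and> level \<alpha> i ! j = \<beta>"

definition ctx :: "(form \<Rightarrow> nat \<Rightarrow> complex mat) \<Rightarrow> form \<Rightarrow> nat \<Rightarrow> nat \<Rightarrow> complex mat" where
  "ctx Hol \<alpha> i j = Red j (map (\<lambda>b. 2 ^ At b) (level \<alpha> i)) (Hol \<alpha> i)"

text \<open>Hol \<alpha> i is the qumix Hol_T(Level_i^\<alpha>)\<close>
definition holistic :: "complex mat \<Rightarrow> (form \<Rightarrow> nat \<Rightarrow> complex mat) \<Rightarrow> bool" where
  "holistic T Hol \<longleftrightarrow>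
     (\<forall>\<alpha>.
       (\<forall>i. 1 \<le> i \<and> i \<le> height \<alpha> \<longrightarrow> density (2 ^ At \<alpha>) (Hol \<alpha> i)) \<and>
       (\<forall>i. 1 \<le> i \<and> i < height \<alpha> \<longrightarrow>
            Hol \<alpha> i = Dgate (level_gate T \<alpha> i) (Hol \<alpha> (Suc i))) \<and>
       (\<forall>\<beta> i j i' j'. occ \<alpha> i j \<beta> \<and> occ \<alpha> i' j' \<beta> \<longrightarrow> ctx Hol \<alpha> i j = ctx Hol \<alpha> i' j') \<and>
       (\<forall>i j. occ \<alpha> i j FF \<longrightarrow> ctx Hol \<alpha> i j = P0 T 1) \<and>
       (\<forall>i j. occ \<alpha> i j TT \<longrightarrow> ctx Hol \<alpha> i j = P1 T 1))"

text \<open>Hol^\<gamma>_T(\<beta>): the (common) contextual meaning of the occurrences of \<beta> in \<gamma>\<close>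
definition hol_meaning :: "(form \<Rightarrow> nat \<Rightarrow> complex mat) \<Rightarrow> form \<Rightarrow> form \<Rightarrow> complex mat" where
  "hol_meaning Hol \<gamma> \<beta> = (SOME M. \<exists>i j. occ \<gamma> i j \<beta> \<and> M = ctx Hol \<gamma> i j)"

end

theory Submission
  imports Defs
begin

lemma mult_entry:
  assumes "i < dim_row A" "j < dim_col B" "dim_col A = n" "dim_row B = n"
  shows "(A * B) $$ (i,j) = (\<Sum>k<n. A $$ (i,k) * B $$ (k,j))"
  using assms by (simp add: scalar_prod_def lessThan_atLeast0 row_def col_def)

lemma sum_split_mult:
  fixes f :: "nat \<Rightarrow> 'a::comm_monoid_add"
  shows "(\<Sum>k<b*e. f k) = (\<Sum>k1<b. \<Sum>k2<e. f (k1*e+k2))"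
proof (induction b)
  case 0 then show ?case by simp
next
  case (Suc b)
  have 1: "{..<Suc b*e} = {..<b*e} \<union> {b*e..<b*e+e}" by auto
  have 2: "(\<Sum>k\<in>{b*e..<b*e+e}. f k) = (\<Sum>k<e. f (b*e+k))"
  proof -
    have "(\<Sum>k\<in>{b*e..<b*e+e}. f k) = (\<Sum>k\<in>{0+b*e..<e+b*e}. f k)" by (simp add: add.commute)
    also have "\<dots> = (\<Sum>k\<in>{0..<e}. f (k + b*e))" by (rule sum.shift_bounds_nat_ivl)
    finally show ?thesis by (simp add: lessThan_atLeast0 add.commute)
  qed
  have "(\<Sum>k<Suc b*e. f k) = (\<Sum>k<b*e. f k) + (\<Sum>k\<in>{b*e..<b*e+e}. f k)"
    unfolding 1 by (rule sum.union_disjoint) auto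
  then show ?case using Suc 2 by simp
qed

lemma dim_kron[simp]: "dim_row (kron A B) = dim_row A * dim_row B" "dim_col (kron A B) = dim_col A * dim_col B"
  by (auto simp: kron_def)

lemma kron_carrier: "A \<in> carrier_mat a b \<Longrightarrow> B \<in> carrier_mat c d \<Longrightarrow> kron A B \<in> carrier_mat (a*c) (b*d)"
proof -
  assume "A \<in> carrier_mat a b" "B \<in> carrier_mat c d"
  then have "dim_row A = a" "dim_col A = b" "dim_row B = c" "dim_col B = d" by auto
  then show ?thesis by (intro carrier_matI) simp_all
qed

lemma kron_index:
  "i < dim_row A * dim_row B \<Longrightarrow> j < dim_col A * dim_col B \<Longrightarrow>
   kron A B $$ (i,j) = A $$ (i div dim_row B, j div dim_col B) * B $$ (i mod dim_row B, j mod dim_col B)"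
  by (simp add: kron_def)

lemma dim_adj[simp]: "dim_row (adj A) = dim_col A" "dim_col (adj A) = dim_row A"
  by (auto simp: adj_def)

lemma adj_index[simp]: "i < dim_col A \<Longrightarrow> j < dim_row A \<Longrightarrow> adj A $$ (i,j) = cnj (A $$ (j,i))"
  by (simp add: adj_def)

lemma pos2: "(i::nat) < a*b \<Longrightarrow> 0 < b" by (cases b) auto
lemma pos1: "(i::nat) < a*b \<Longrightarrow> 0 < a" by (cases a) auto
lemma pos3: "(i::nat) < a*b*c \<Longrightarrow> 0 < b" by (cases b) auto

lemma dm1: "(i::nat) mod (b*c) div c = i div c mod b"
  by (metis add.right_neutral div_mult_self4 mod_by_0 mod_div_trivial
    mod_mult2_eq mod_mult_self1_is_0 mult.commute)

lemma dm2: "(i::nat) mod (b*c) mod c = i mod c"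
  by (simp add: mod_mod_cancel)

lemma dm3: "(i::nat) div (b*c) = i div c div b"
  by (metis div_mult2_eq mult.commute)

lemma kron_assoc: "kron (kron A B) C = kron A (kron B C)"
proof (rule eq_matI)
  fix i j assume i: "i < dim_row (kron A (kron B C))" and j: "j < dim_col (kron A (kron B C))"
  let ?rB = "dim_row B" and ?rC = "dim_row C" and ?cB = "dim_col B" and ?cC = "dim_col C"
  have i': "i < dim_row A * ?rB * ?rC" and j': "j < dim_col A * ?cB * ?cC" using i j by (auto simp: mult.assoc)
  have a1: "i div ?rC < dim_row A * ?rB" "j div ?cC < dim_col A * ?cB"
    using i' j' by (auto intro: less_mult_imp_div_less)
  have a2: "i mod (?rB * ?rC) < ?rB * ?rC" "j mod (?cB * ?cC) < ?cB * ?cC"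
    using i' j' pos2 pos3 by (metis mod_less_divisor mult_pos_pos)+
  have "kron (kron A B) C $$ (i,j) = kron A B $$ (i div ?rC, j div ?cC) * C $$ (i mod ?rC, j mod ?cC)"
    using i' j' by (simp add: kron_index)
  also have "\<dots> = A $$ (i div ?rC div ?rB, j div ?cC div ?cB) * B $$ (i div ?rC mod ?rB, j div ?cC mod ?cB)
       * C $$ (i mod ?rC, j mod ?cC)" using a1 by (simp add: kron_index)
  also have "\<dots> = A $$ (i div (?rB * ?rC), j div (?cB*?cC)) * (kron B C $$ (i mod (?rB * ?rC), j mod (?cB*?cC)))"
    using a2 by (simp add: kron_index dm1 dm2 dm3)
  also have "\<dots> = kron A (kron B C) $$ (i,j)" using i j by (simp add: kron_index)
  finally show "kron (kron A B) C $$ (i,j) = kron A (kron B C) $$ (i,j)" .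
qed (auto simp: mult.assoc)

lemma kron_one_left: "kron (1\<^sub>m 1) A = A"
  by (rule eq_matI) (auto simp: kron_index)

lemma kron_one_right: "kron A (1\<^sub>m 1) = A"
  by (rule eq_matI) (auto simp: kron_index)

lemma kron_list_append: "kron_list (xs @ ys) = kron (kron_list xs) (kron_list ys)"
  by (induction xs) (auto simp: kron_one_left[simplified] kron_assoc)

lemma adj_kron: "adj (kron A B) = kron (adj A) (adj B)"
proof (rule eq_matI)
  fix i j assume i: "i < dim_row (kron (adj A) (adj B))" and j: "j < dim_col (kron (adj A) (adj B))"
  have "i div dim_col B < dim_col A" "j div dim_row B < dim_row A"
    using i j by (auto intro: less_mult_imp_div_less)
  moreover have "i mod dim_col B < dim_col B" "j mod dim_row B < dim_row B"
    using i j pos2[of i "dim_col A" "dim_col B"] pos2[of j "dim_row A" "dim_row B"] by auto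
  ultimately show "adj (kron A B) $$ (i,j) = kron (adj A) (adj B) $$ (i,j)"
    using i j apply (subst adj_index)
    apply simp apply simp
    apply (subst kron_index) apply simp apply simp
    apply (subst kron_index) apply simp apply simp
    apply (subst adj_index, simp, simp)+
    by simp
qed auto

lemma mult_kron:
  assumes A: "A \<in> carrier_mat a b" and C: "C \<in> carrier_mat b c"
      and B: "B \<in> carrier_mat d e" and D: "D \<in> carrier_mat e f"
  shows "kron A B * kron C D = kron (A*C) (B*D)"
proof (rule eq_matI)
  fix i j assume i: "i < dim_row (kron (A*C) (B*D))" and j: "j < dim_col (kron (A*C) (B*D))"
  have i': "i < a*d" and j': "j < c*f" using i j A B C D by auto
  have d0: "0 < d" and f0: "0 < f" using i' j' pos2 by blast+
  have id: "i div d < a" "i mod d < d" "j div f < c" "j mod f < f"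
    using i' j' d0 f0 by (auto intro: less_mult_imp_div_less)
  have "(kron A B * kron C D) $$ (i,j) = (\<Sum>k<b*e. kron A B $$ (i,k) * kron C D $$ (k,j))"
    using i' j' A B C D by (intro mult_entry) auto
  also have "\<dots> = (\<Sum>k1<b. \<Sum>k2<e. kron A B $$ (i,k1*e+k2) * kron C D $$ (k1*e+k2,j))"
    by (rule sum_split_mult)
  also have "\<dots> = (\<Sum>k1<b. \<Sum>k2<e. (A $$ (i div d, k1) * C $$ (k1, j div f)) * (B $$ (i mod d, k2) * D $$ (k2, j mod f)))"
  proof (intro sum.cong refl)
    fix k1 k2 assume k1: "k1 \<in> {..<b}" and k2: "k2 \<in> {..<e}"
    have kb: "k1*e+k2 < b*e"
    proof -
      have "k1*e+k2 < k1*e + e" using k2 by simp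
      also have "\<dots> \<le> b*e" using k1 by (simp add: mult_le_mono1 add.commute[of _ e] mult_Suc[symmetric] del: mult_Suc)
      finally show ?thesis .
    qed
    have "(k1*e+k2) div e = k1" "(k1*e+k2) mod e = k2" using k2 by auto
    then show "kron A B $$ (i,k1*e+k2) * kron C D $$ (k1*e+k2,j) =
       (A $$ (i div d, k1) * C $$ (k1, j div f)) * (B $$ (i mod d, k2) * D $$ (k2, j mod f))"
      using i' j' kb A B C D by (simp add: kron_index)
  qed
  also have "\<dots> = (\<Sum>k1<b. A $$ (i div d, k1) * C $$ (k1, j div f)) * (\<Sum>k2<e. B $$ (i mod d, k2) * D $$ (k2, j mod f))"
    by (simp add: sum_product)
  also have "\<dots> = (A*C) $$ (i div d, j div f) * (B*D) $$ (i mod d, j mod f)"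
  proof -
    have "(A*C) $$ (i div d, j div f) = (\<Sum>k1<b. A $$ (i div d, k1) * C $$ (k1, j div f))"
      by (rule mult_entry) (use id A C in auto)
    moreover have "(B*D) $$ (i mod d, j mod f) = (\<Sum>k2<e. B $$ (i mod d, k2) * D $$ (k2, j mod f))"
      by (rule mult_entry) (use id B D in auto)
    ultimately show ?thesis by simp
  qed
  also have "\<dots> = kron (A*C) (B*D) $$ (i,j)"
    using i j A B C D by (simp add: kron_index)
  finally show "(kron A B * kron C D) $$ (i,j) = kron (A*C) (B*D) $$ (i,j)" .
qed (use A B C D in auto)

lemma kron_one_one: "kron (1\<^sub>m a) (1\<^sub>m b) = 1\<^sub>m (a*b)"
proof (rule eq_matI)
  fix i j assume i: "i < dim_row (1\<^sub>m (a*b))" and j: "j < dim_col (1\<^sub>m (a*b))"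
  then have i': "i < a*b" and j': "j < a*b" by auto
  have b0: "0 < b" using i' pos2 by blast
  show "kron (1\<^sub>m a) (1\<^sub>m b) $$ (i,j) = 1\<^sub>m (a*b) $$ (i,j)"
    using i' j' b0 apply (simp add: kron_index less_mult_imp_div_less)
    by (metis div_mult_mod_eq)
qed auto

lemma adj_carrier: "A \<in> carrier_mat a b \<Longrightarrow> adj A \<in> carrier_mat b a"
proof -
  assume "A \<in> carrier_mat a b"
  then have "dim_row A = a" "dim_col A = b" by auto
  then show ?thesis by (intro carrier_matI) simp_all
qed

lemma adj_adj: "adj (adj A) = A"
  by (rule eq_matI) auto

lemma adj_one: "adj (1\<^sub>m n) = 1\<^sub>m n"
  by (rule eq_matI) auto

lemma adj_mult: assumes "A \<in> carrier_mat a b" "B \<in> carrier_mat b c"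
  shows "adj (A * B) = adj B * adj A"
proof (rule eq_matI)
  fix i j assume "i < dim_row (adj B * adj A)" "j < dim_col (adj B * adj A)"
  then have i: "i < c" and j: "j < a" using assms by auto
  have "(A * B) $$ (j,i) = (\<Sum>k<b. A $$ (j,k) * B $$ (k,i))"
    by (rule mult_entry) (use i j assms in auto)
  then have "adj (A * B) $$ (i,j) = cnj (\<Sum>k<b. A $$ (j,k) * B $$ (k,i))"
    using i j assms by simp
  also have "\<dots> = (\<Sum>k<b. adj B $$ (i,k) * adj A $$ (k,j))"
    using i j assms by (simp add: mult.commute)
  also have "\<dots> = (adj B * adj A) $$ (i,j)"
    by (rule mult_entry[symmetric]) (use i j assms in auto)
  finally show "adj (A * B) $$ (i,j) = (adj B * adj A) $$ (i,j)" .
qed (use assms in auto)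

lemma unitary_kron:
  assumes "unitary_op a A" "unitary_op b B"
  shows "unitary_op (a*b) (kron A B)"
proof -
  have A: "A \<in> carrier_mat a a" "adj A * A = 1\<^sub>m a" "A * adj A = 1\<^sub>m a"
   and B: "B \<in> carrier_mat b b" "adj B * B = 1\<^sub>m b" "B * adj B = 1\<^sub>m b"
    using assms by (auto simp: unitary_op_def)
  have aA: "adj A \<in> carrier_mat a a" and aB: "adj B \<in> carrier_mat b b" using A B by (auto simp: adj_carrier)
  have "adj (kron A B) * kron A B = kron (adj A * A) (adj B * B)"
    unfolding adj_kron by (rule mult_kron[OF aA A(1) aB B(1)])
  moreover have "kron A B * adj (kron A B) = kron (A * adj A) (B * adj B)"
    unfolding adj_kron by (rule mult_kron[OF A(1) aA B(1) aB])
  ultimately show ?thesis using A B by (simp add: unitary_op_def kron_one_one kron_carrier)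
qed

lemma unitary_mult:
  assumes "unitary_op n A" "unitary_op n B"
  shows "unitary_op n (A*B)"
proof -
  have A: "A \<in> carrier_mat n n" "adj A * A = 1\<^sub>m n" "A * adj A = 1\<^sub>m n"
   and B: "B \<in> carrier_mat n n" "adj B * B = 1\<^sub>m n" "B * adj B = 1\<^sub>m n"
    using assms by (auto simp: unitary_op_def)
  have aA: "adj A \<in> carrier_mat n n" and aB: "adj B \<in> carrier_mat n n" using A B by (auto simp: adj_carrier)
  have "adj (A*B) * (A*B) = (adj B * adj A) * (A * B)" using A B by (simp add: adj_mult)
  also have "\<dots> = adj B * (adj A * (A * B))" using A B aA aB by (meson assoc_mult_mat mult_carrier_mat)
  also have "adj A * (A * B) = (adj A * A) * B" by (rule assoc_mult_mat[OF aA A(1) B(1), symmetric])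
  also have "adj B * ((adj A * A) * B) = 1\<^sub>m n" using A B aB by (simp del: assoc_mult_mat)
  finally have 1: "adj (A*B) * (A*B) = 1\<^sub>m n" .
  have "(A*B) * adj (A*B) = (A * B) * (adj B * adj A)" using A B by (simp add: adj_mult)
  also have "\<dots> = A * (B * (adj B * adj A))" using A B aA aB by (meson assoc_mult_mat mult_carrier_mat)
  also have "B * (adj B * adj A) = (B * adj B) * adj A" by (rule assoc_mult_mat[OF B(1) aB aA, symmetric])
  also have "A * ((B * adj B) * adj A) = 1\<^sub>m n" using A B aA by (simp del: assoc_mult_mat)
  finally have 2: "(A*B) * adj (A*B) = 1\<^sub>m n" .
  show ?thesis using 1 2 A B by (auto simp: unitary_op_def)
qed

lemma unitary_adj: "unitary_op n A \<Longrightarrow> unitary_op n (adj A)"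
  by (auto simp: unitary_op_def adj_adj adj_carrier)

lemma unitary_one: "unitary_op n (1\<^sub>m n)"
  by (simp add: unitary_op_def adj_one)

lemma unitary_kron_pow: "unitary_op 2 T \<Longrightarrow> unitary_op (2^n) (kron_pow T n)"
proof (induction n)
  case 0 then show ?case by (simp add: kron_pow_def unitary_one)
next
  case (Suc n)
  then have "unitary_op (2 * 2^n) (kron T (kron_pow T n))" by (intro unitary_kron) auto
  then show ?case by (simp add: kron_pow_def)
qed

lemma unitary_conjT: "unitary_op 2 T \<Longrightarrow> unitary_op (2^n) G \<Longrightarrow> unitary_op (2^n) (conjT T n G)"
  unfolding conjT_def by (intro unitary_mult unitary_adj unitary_kron_pow)

lemma par1: "(2::nat)*a \<noteq> 2*b + 1"
proof
  assume "2*a = 2*b+1" then have "(2*a) mod 2 = (2*b+1) mod 2" by simp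
  then show False by simp
qed

lemma flip_iff: "(r = flip_last c) \<longleftrightarrow> (r div 2 = c div 2 \<and> r mod 2 \<noteq> c mod 2)"
proof -
  define a where "a = r div 2"
  define x where "x = r mod 2"
  define b where "b = c div 2"
  define y where "y = c mod 2"
  have r: "r = 2*a + x" unfolding a_def x_def by simp
  have c: "c = 2*b + y" unfolding b_def y_def by simp
  have x: "x < 2" and y: "y < 2" unfolding x_def y_def by simp_all
  have ev: "even c \<longleftrightarrow> y = 0" unfolding y_def by (simp add: even_iff_mod_2_eq_zero)
  have "(r = (if y = 0 then c + 1 else c - 1)) \<longleftrightarrow> (a = b \<and> x \<noteq> y)"
  proof -
    have "x = 0 \<or> x = 1" "y = 0 \<or> y = 1" using x y by auto
    then show ?thesis using r c par1[of a b] par1[of b a] by (elim disjE) auto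
  qed
  then show ?thesis unfolding flip_last_def ev a_def[symmetric] x_def[symmetric] b_def[symmetric] y_def[symmetric] .
qed

lemma flip_ne: "flip_last c \<noteq> c"
  unfolding flip_last_def by (auto elim!: oddE)

lemma pow2: "1 \<le> n \<Longrightarrow> (2::nat)^n = 2^(n-1) * 2"
  using power_minus_mult[of n "2::nat"] by simp

lemma flip_ne2: "c \<noteq> flip_last c"
  using flip_ne[of c] by metis

lemma last_qubit_gate:
  assumes n: "1 \<le> n"
  shows "mat (2^n) (2^n) (\<lambda>(r,c). if r = c then p (even c) else if r = flip_last c then q (even c) else 0)
       = kron (1\<^sub>m (2^(n-1))) (mat 2 2 (\<lambda>(r,c). if r = c then p (even c) else q (even c)))"
proof (rule eq_matI)
  have N: "(2::nat)^n = 2^(n-1) * 2" using n power_minus_mult[of n "2::nat"] by simp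
  fix i j assume "i < dim_row (kron (1\<^sub>m (2^(n-1))) (mat 2 2 (\<lambda>(r,c). if r = c then p (even c) else q (even c))))"
    "j < dim_col (kron (1\<^sub>m (2^(n-1))) (mat 2 2 (\<lambda>(r,c). if r = c then p (even c) else q (even c))))"
  then have i: "i < 2^(n-1) * 2" and j: "j < 2^(n-1) * 2" by auto
  have d: "i div 2 < 2^(n-1)" "j div 2 < 2^(n-1)" using i j by (auto intro: less_mult_imp_div_less)
  have ev: "even (j mod 2) = even j" by simp
  have eqi: "i = j \<longleftrightarrow> (i div 2 = j div 2 \<and> i mod 2 = j mod 2)" by (metis div_mult_mod_eq)
  show "mat (2^n) (2^n) (\<lambda>(r,c). if r = c then p (even c) else if r = flip_last c then q (even c) else 0) $$ (i,j) =
        kron (1\<^sub>m (2^(n-1))) (mat 2 2 (\<lambda>(r,c). if r = c then p (even c) else q (even c))) $$ (i,j)"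
    using i j d N eqi by (auto simp: kron_index flip_iff)
qed (use pow2[OF n] in simp_all)

lemma mult2_entry:
  assumes "A \<in> carrier_mat 2 2" "B \<in> carrier_mat 2 2" "i < 2" "j < 2"
  shows "(A * B) $$ (i,j) = A $$ (i,0) * B $$ (0,j) + A $$ (i,1) * B $$ (1,j)"
proof -
  have "(A * B) $$ (i,j) = (\<Sum>k<2. A $$ (i,k) * B $$ (k,j))"
    by (rule mult_entry) (use assms in auto)
  also have "\<dots> = A $$ (i,0) * B $$ (0,j) + A $$ (i,1) * B $$ (1,j)"
    by (simp add: numeral_2_eq_2 lessThan_Suc add.commute)
  finally show ?thesis .
qed

lemma less2: "(i::nat) < 2 \<Longrightarrow> i = 0 \<or> i = 1" by auto

lemma unitary2:
  fixes p q :: "bool \<Rightarrow> complex"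
  defines "U \<equiv> mat 2 2 (\<lambda>(r,c). if r = c then p (even c) else q (even c))"
  assumes a1: "cnj (p True) * p True + cnj (q True) * q True = 1"
    and a2: "cnj (q False) * q False + cnj (p False) * p False = 1"
    and a3: "cnj (p True) * q False + cnj (q True) * p False = 0"
    and a4: "p True * cnj (p True) + q False * cnj (q False) = 1"
    and a5: "q True * cnj (q True) + p False * cnj (p False) = 1"
    and a6: "p True * cnj (q True) + q False * cnj (p False) = 0"
  shows "unitary_op 2 U"
proof -
  have U: "U \<in> carrier_mat 2 2" by (simp add: U_def)
  have aU: "adj U \<in> carrier_mat 2 2" using U by (rule adj_carrier)
  have e: "U $$ (0,0) = p True" "U $$ (0,1) = q False" "U $$ (1,0) = q True" "U $$ (1,1) = p False"
    by (simp_all add: U_def)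
  have ae: "adj U $$ (0,0) = cnj (p True)" "adj U $$ (0,1) = cnj (q True)"
     "adj U $$ (1,0) = cnj (q False)" "adj U $$ (1,1) = cnj (p False)"
    using U e by (simp_all add: adj_def)
  have c1: "cnj (q False) * p True + cnj (p False) * q True = 0"
    using arg_cong[OF a3, of cnj] by (simp add: mult.commute)
  have c2: "q True * cnj (p True) + p False * cnj (q False) = 0"
    using arg_cong[OF a6, of cnj] by (simp add: mult.commute)
  have 1: "adj U * U = 1\<^sub>m 2"
  proof (rule eq_matI)
    fix i j assume "i < dim_row (1\<^sub>m 2)" "j < dim_col (1\<^sub>m 2)"
    then have i: "i < 2" and j: "j < 2" by auto
    show "(adj U * U) $$ (i,j) = 1\<^sub>m 2 $$ (i,j)"
      unfolding mult2_entry[OF aU U i j]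
      using less2[OF i] less2[OF j] e ae a1 a2 a3 c1 by auto
  qed (use U in auto)
  have 2: "U * adj U = 1\<^sub>m 2"
  proof (rule eq_matI)
    fix i j assume "i < dim_row (1\<^sub>m 2)" "j < dim_col (1\<^sub>m 2)"
    then have i: "i < 2" and j: "j < 2" by auto
    show "(U * adj U) $$ (i,j) = 1\<^sub>m 2 $$ (i,j)"
      unfolding mult2_entry[OF U aU i j]
      using less2[OF i] less2[OF j] e ae a4 a5 a6 c2 by auto
  qed (use U in auto)
  show ?thesis using U 1 2 by (simp add: unitary_op_def)
qed

lemma unitary_last_qubit:
  assumes n: "1 \<le> n" and U: "unitary_op 2 (mat 2 2 (\<lambda>(r,c). if r = c then p (even c) else q (even c)))"
  shows "unitary_op (2^n) (mat (2^n) (2^n) (\<lambda>(r,c). if r = c then p (even c) else if r = flip_last c then q (even c) else 0))"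
proof -
  show ?thesis
    apply (subst last_qubit_gate[OF n])
    apply (subst pow2[OF n])
    by (intro unitary_kron unitary_one U)
qed

lemma NOT_form: "NOT_gate n = mat (2^n) (2^n) (\<lambda>(r,c). if r = c then (\<lambda>_. 0::complex) (even c) else if r = flip_last c then (\<lambda>_. 1) (even c) else 0)"
  unfolding NOT_gate_def perm_gate_def by (rule eq_matI) (auto simp: flip_ne flip_ne2)

lemma SqrtI_form: "SqrtI_gate n = mat (2^n) (2^n) (\<lambda>(r,c). if r = c then (\<lambda>b. (if b then 1 else -1) / complex_of_real (sqrt 2)) (even c) else if r = flip_last c then (\<lambda>_. 1 / complex_of_real (sqrt 2)) (even c) else 0)"
  unfolding SqrtI_gate_def by simp

lemma SqrtNOT_form: "SqrtNOT_gate n = mat (2^n) (2^n) (\<lambda>(r,c). if r = c then (\<lambda>_. (1 - \<i>) / 2) (even c) else if r = flip_last c then (\<lambda>_. (1 + \<i>) / 2) (even c) else 0)"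
  unfolding SqrtNOT_gate_def by simp

lemma s2': "complex_of_real (sqrt 2) * complex_of_real (sqrt 2) = 2"
proof -
  have "complex_of_real (sqrt 2) * complex_of_real (sqrt 2) = complex_of_real (sqrt 2 * sqrt 2)"
    by (simp only: of_real_mult)
  also have "sqrt 2 * sqrt 2 = (2::real)" by simp
  finally show ?thesis by simp
qed

lemma s2: "(1 / complex_of_real (sqrt 2)) * (1 / complex_of_real (sqrt 2)) = 1/2"
proof -
  have "complex_of_real (sqrt 2) * complex_of_real (sqrt 2) = complex_of_real (sqrt 2 * sqrt 2)"
    by (simp only: of_real_mult)
  also have "sqrt 2 * sqrt 2 = (2::real)" by simp
  finally have "complex_of_real (sqrt 2) * complex_of_real (sqrt 2) = 2" by simp
  then show ?thesis by (simp add: field_simps)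
qed

lemma unitary_NOT: "1 \<le> n \<Longrightarrow> unitary_op (2^n) (NOT_gate n)"
  unfolding NOT_form by (rule unitary_last_qubit) (auto intro!: unitary2)

lemma unitary_SqrtI: "1 \<le> n \<Longrightarrow> unitary_op (2^n) (SqrtI_gate n)"
  unfolding SqrtI_form by (rule unitary_last_qubit) (auto intro!: unitary2 simp: s2 s2')

lemma unitary_SqrtNOT: "1 \<le> n \<Longrightarrow> unitary_op (2^n) (SqrtNOT_gate n)"
  unfolding SqrtNOT_form by (rule unitary_last_qubit) (auto intro!: unitary2 simp: complex_eq_iff)

lemma unitary_perm:
  assumes f: "\<And>c. c < N \<Longrightarrow> f c < N \<and> f (f c) = c"
  shows "unitary_op N (perm_gate N f)"
proof -
  let ?P = "perm_gate N f"
  have P: "?P \<in> carrier_mat N N" by (simp add: perm_gate_def)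
  have aP: "adj ?P \<in> carrier_mat N N" using P by (rule adj_carrier)
  have 1: "adj ?P * ?P = 1\<^sub>m N"
  proof (rule eq_matI)
    fix i j assume "i < dim_row (1\<^sub>m N)" "j < dim_col (1\<^sub>m N)"
    then have i: "i < N" and j: "j < N" by auto
    have "(adj ?P * ?P) $$ (i,j) = (\<Sum>k<N. adj ?P $$ (i,k) * ?P $$ (k,j))"
      by (rule mult_entry) (use i j P in auto)
    also have "\<dots> = (\<Sum>k<N. if k = f i then (if f i = f j then 1 else 0) else 0)"
      by (rule sum.cong) (use i j in \<open>auto simp: perm_gate_def\<close>)
    also have "\<dots> = (if f i = f j then 1 else 0)"
      using f[OF i] by (simp add: sum.delta')
    also have "(f i = f j) = (i = j)" using f[OF i] f[OF j] by metis
    finally show "(adj ?P * ?P) $$ (i,j) = 1\<^sub>m N $$ (i,j)" using i j by simp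
  qed (use P in auto)
  have 2: "?P * adj ?P = 1\<^sub>m N"
  proof (rule eq_matI)
    fix i j assume "i < dim_row (1\<^sub>m N)" "j < dim_col (1\<^sub>m N)"
    then have i: "i < N" and j: "j < N" by auto
    have "(?P * adj ?P) $$ (i,j) = (\<Sum>k<N. ?P $$ (i,k) * adj ?P $$ (k,j))"
      by (rule mult_entry) (use i j P in auto)
    also have "\<dots> = (\<Sum>k<N. if k = f i then (if i = j then 1 else 0) else 0)"
    proof (rule sum.cong)
      fix k assume k: "k \<in> {..<N}"
      have kN: "k < N" using k by simp
      have "(i = f k) = (k = f i)" using f[OF i] f[OF kN] by metis
      moreover have "(j = f k) = (k = f j)" using f[OF j] f[OF kN] by metis
      ultimately show "?P $$ (i,k) * adj ?P $$ (k,j) = (if k = f i then (if i = j then 1 else 0) else 0)"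
        using i j kN by (auto simp: perm_gate_def)
    qed simp
    also have "\<dots> = (if i = j then 1 else 0)"
      using f[OF i] by (simp add: sum.delta')
    finally show "(?P * adj ?P) $$ (i,j) = 1\<^sub>m N $$ (i,j)" using i j by simp
  qed (use P in auto)
  show ?thesis using P 1 2 by (simp add: unitary_op_def)
qed

lemma lastbit:
  assumes n: "1 \<le> n" and b: "(b::nat) < 2^n" and x: "x < 2"
  shows "b - b mod 2 + x < 2^n" "(b - b mod 2 + x) div 2 = b div 2" "(b - b mod 2 + x) mod 2 = x"
    "b - b mod 2 + b mod 2 = b"
proof -
  have e: "b - b mod 2 = 2 * (b div 2)" by (simp add: minus_mod_eq_mult_div)
  have N: "(2::nat)^n = 2 * 2^(n-1)" using n power_minus_mult[of n "2::nat"] by simp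
  have "b div 2 < 2^(n-1)" using b N by (auto intro: less_mult_imp_div_less simp: mult.commute)
  then show "b - b mod 2 + x < 2^n" using e N x by linarith
  show "(b - b mod 2 + x) div 2 = b div 2" "(b - b mod 2 + x) mod 2 = x" using e x by auto
  show "b - b mod 2 + b mod 2 = b" by simp
qed

lemma divmodM: "(b::nat) < M \<Longrightarrow> (a*M+b) div M = a" "(b::nat) < M \<Longrightarrow> (a*M+b) mod M = b"
  by auto

lemma xor2: "((t::nat) + (t + y) mod 2) mod 2 = y mod 2"
proof -
  have "((t::nat) + (t + y) mod 2) mod 2 = (t + (t + y)) mod 2" by (rule mod_add_right_eq)
  also have "t + (t + y) = y + 2 * t" by simp
  also have "(y + 2 * t) mod 2 = y mod 2" by simp
  finally show ?thesis .
qed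

lemma unitary_XOR: assumes n: "1 \<le> n" shows "unitary_op (2^(m+n)) (XOR_gate m n)"
  unfolding XOR_gate_def
proof (rule unitary_perm)
  fix c :: nat assume c: "c < 2^(m+n)"
  define F where "F = (\<lambda>c::nat. let a = c div 2 ^ n; b = c mod 2 ^ n in
     a * 2 ^ n + (b - b mod 2 + (a mod 2 + b mod 2) mod 2))"
  have Fd: "F c = (c div 2^n) * 2^n + (c mod 2^n - c mod 2^n mod 2 + (c div 2^n mod 2 + c mod 2^n mod 2) mod 2)" for c
    unfolding F_def Let_def by (rule refl)
  define a where "a = c div 2^n"
  define b where "b = c mod 2^n"
  define x where "x = (a mod 2 + b mod 2) mod 2"
  have b: "b < 2^n" by (simp add: b_def)
  have a: "a < 2^m" using c by (simp add: a_def less_mult_imp_div_less power_add)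
  have x: "x < 2" by (simp add: x_def)
  note L = lastbit[OF n b x]
  have Fc: "F c = a * 2^n + (b - b mod 2 + x)" unfolding Fd a_def b_def x_def by (rule refl)
  have "F c < 2^(m+n)"
  proof -
    have "F c < a * 2^n + 2^n" using Fc L(1) by simp
    also have "\<dots> = (a+1) * 2^n" by simp
    also have "\<dots> \<le> 2^m * 2^n" using a by (intro mult_le_mono1) simp
    finally show ?thesis by (simp add: power_add)
  qed
  moreover have "F (F c) = c"
  proof -
    have d1: "F c div 2^n = a" unfolding Fc by (rule divmodM(1)[OF L(1)])
    have m1: "F c mod 2^n = b - b mod 2 + x" unfolding Fc by (rule divmodM(2)[OF L(1)])
    have "F (F c) = a * 2^n + ((b - b mod 2 + x) - (b - b mod 2 + x) mod 2 + (a mod 2 + (b - b mod 2 + x) mod 2) mod 2)"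
      unfolding Fd[of "F c"] d1 m1 by (rule refl)
    also have "\<dots> = a * 2^n + (b - b mod 2 + b mod 2)"
      using L(3) by (simp add: x_def xor2)
    also have "\<dots> = a * 2^n + b" by (simp only: L(4))
    also have "\<dots> = c" unfolding a_def b_def by (rule div_mult_mod_eq)
    finally show ?thesis .
  qed
  ultimately show "F c < 2^(m+n) \<and> F (F c) = c" by simp
qed

lemma unitary_Toffoli: assumes p: "1 \<le> p" shows "unitary_op (2^(m+n+p)) (Toffoli_gate m n p)"
  unfolding Toffoli_gate_def
proof (rule unitary_perm)
  fix c :: nat assume c: "c < 2^(m+n+p)"
  define F where "F = (\<lambda>c::nat. let a = c div 2 ^ (n + p); b = (c div 2 ^ p) mod 2 ^ n; z = c mod 2 ^ p in
     a * 2 ^ (n + p) + b * 2 ^ p + (z - z mod 2 + ((a mod 2) * (b mod 2) + z mod 2) mod 2))"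
  have Fd: "F c = (c div 2^(n+p)) * 2^(n+p) + ((c div 2^p) mod 2^n) * 2^p
     + (c mod 2^p - c mod 2^p mod 2 + ((c div 2^(n+p) mod 2) * ((c div 2^p) mod 2^n mod 2) + c mod 2^p mod 2) mod 2)" for c
    unfolding F_def Let_def by (rule refl)
  have dd: "c div 2^(n+p) = c div 2^p div 2^n" for c :: nat
    unfolding power_add mult.commute[of "2^n" "2^p"] by (rule div_mult2_eq)
  define a where "a = c div 2^(n+p)"
  define b where "b = (c div 2^p) mod 2^n"
  define z where "z = c mod 2^p"
  define x where "x = ((a mod 2) * (b mod 2) + z mod 2) mod 2"
  have b: "b < 2^n" by (simp add: b_def)
  have z: "z < 2^p" by (simp add: z_def)
  have "c < 2^m * 2^(n+p)" using c by (simp add: power_add mult.assoc)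
  then have a: "a < 2^m" unfolding a_def by (rule less_mult_imp_div_less)
  have x: "x < 2" by (simp add: x_def)
  note L = lastbit[OF p z x]
  have cq: "c div 2^p = a * 2^n + b" unfolding a_def dd b_def by (rule div_mult_mod_eq[symmetric])
  have c0: "c = c div 2^p * 2^p + z" unfolding z_def by (rule div_mult_mod_eq[symmetric])
  have cdec: "c = (a * 2^n + b) * 2^p + z" using c0 unfolding cq .
  have Fc0: "F c = a * 2^(n+p) + b * 2^p + (z - z mod 2 + x)"
    unfolding Fd a_def b_def z_def x_def by (rule refl)
  have Fc: "F c = (a * 2^n + b) * 2^p + (z - z mod 2 + x)"
    unfolding Fc0 by (simp add: power_add algebra_simps)
  have "F c < 2^(m+n+p)"
  proof -
    have "F c < (a * 2^n + b) * 2^p + 2^p" using Fc L(1) by simp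
    also have "\<dots> = (a * 2^n + b + 1) * 2^p" by simp
    also have "\<dots> \<le> (a * 2^n + 2^n) * 2^p" using b by (intro mult_le_mono1) simp
    also have "\<dots> = (a + 1) * 2^n * 2^p" by (simp add: algebra_simps)
    also have "\<dots> \<le> 2^m * 2^n * 2^p" using a by (intro mult_le_mono1) simp
    finally show ?thesis by (simp add: power_add)
  qed
  moreover have "F (F c) = c"
  proof -
    have q: "F c div 2^p = a * 2^n + b" unfolding Fc by (rule divmodM(1)[OF L(1)])
    have m1: "F c mod 2^p = z - z mod 2 + x" unfolding Fc by (rule divmodM(2)[OF L(1)])
    have d1: "F c div 2^(n+p) = a" unfolding dd q by (rule divmodM(1)[OF b])
    have d2: "(F c div 2^p) mod 2^n = b" unfolding q by (rule divmodM(2)[OF b])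
    have "F (F c) = a * 2^(n+p) + b * 2^p + ((z - z mod 2 + x) - (z - z mod 2 + x) mod 2 + ((a mod 2) * (b mod 2) + (z - z mod 2 + x) mod 2) mod 2)"
      unfolding Fd[of "F c"] d1 d2 m1 by (rule refl)
    also have "\<dots> = a * 2^(n+p) + b * 2^p + (z - z mod 2 + z mod 2)"
      using L(3) by (simp add: x_def xor2)
    also have "\<dots> = a * 2^(n+p) + b * 2^p + z" by (simp only: L(4))
    also have "\<dots> = c" by (subst cdec) (simp add: power_add algebra_simps)
    finally show ?thesis .
  qed
  ultimately show "F c < 2^(m+n+p) \<and> F (F c) = c" by simp
qed

lemma idx_bound: "(u::nat) < n \<Longrightarrow> r < R \<Longrightarrow> u*R+r < n*R"
proof -
  assume "u < n" "r < R"
  then have "u*R + r < u*R + R" by simp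
  also have "\<dots> = Suc u * R" by simp
  also have "\<dots> \<le> n * R" using \<open>u < n\<close> by (intro mult_le_mono1) simp
  finally show ?thesis .
qed

lemma kron_entry2:
  assumes "A \<in> carrier_mat a b" "B \<in> carrier_mat c d" "i < a" "j < b" "k < c" "l < d"
  shows "kron A B $$ (i*c+k, j*d+l) = A $$ (i,j) * B $$ (k,l)"
  using assms by (simp add: kron_index idx_bound)

lemma Dentry:
  assumes G: "G \<in> carrier_mat N N" and r: "\<rho> \<in> carrier_mat N N" and x: "x < N" and y: "y < N"
  shows "(G * \<rho> * adj G) $$ (x,y) = (\<Sum>k'<N. \<Sum>k<N. G $$ (x,k') * \<rho> $$ (k',k) * cnj (G $$ (y,k)))"
proof -
  have "(G * \<rho> * adj G) $$ (x,y) = (\<Sum>k<N. (G * \<rho>) $$ (x,k) * adj G $$ (k,y))"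
    by (rule mult_entry) (use G r x y in auto)
  also have "\<dots> = (\<Sum>k<N. (\<Sum>k'<N. G $$ (x,k') * \<rho> $$ (k',k)) * cnj (G $$ (y,k)))"
  proof (rule sum.cong[OF refl])
    fix k assume k: "k \<in> {..<N}"
    have "(G * \<rho>) $$ (x,k) = (\<Sum>k'<N. G $$ (x,k') * \<rho> $$ (k',k))"
      by (rule mult_entry) (use G r x k in auto)
    then show "(G * \<rho>) $$ (x,k) * adj G $$ (k,y) = (\<Sum>k'<N. G $$ (x,k') * \<rho> $$ (k',k)) * cnj (G $$ (y,k))"
      using G k y by simp
  qed
  also have "\<dots> = (\<Sum>k<N. \<Sum>k'<N. G $$ (x,k') * \<rho> $$ (k',k) * cnj (G $$ (y,k)))"
    by (simp add: sum_distrib_right)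
  also have "\<dots> = (\<Sum>k'<N. \<Sum>k<N. G $$ (x,k') * \<rho> $$ (k',k) * cnj (G $$ (y,k)))"
    by (rule sum.swap)
  finally show ?thesis .
qed

lemma sum_push4:
  "(\<Sum>r\<in>A. \<Sum>a\<in>B1. \<Sum>b\<in>B2. \<Sum>c\<in>B3. \<Sum>d\<in>B4. f r a b c d) =
   (\<Sum>a\<in>B1. \<Sum>b\<in>B2. \<Sum>c\<in>B3. \<Sum>d\<in>B4. \<Sum>r\<in>A. f r a b c d)"
proof -
  have "(\<Sum>r\<in>A. \<Sum>a\<in>B1. \<Sum>b\<in>B2. \<Sum>c\<in>B3. \<Sum>d\<in>B4. f r a b c d) =
        (\<Sum>a\<in>B1. \<Sum>r\<in>A. \<Sum>b\<in>B2. \<Sum>c\<in>B3. \<Sum>d\<in>B4. f r a b c d)" by (rule sum.swap)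
  also have "\<dots> = (\<Sum>a\<in>B1. \<Sum>b\<in>B2. \<Sum>r\<in>A. \<Sum>c\<in>B3. \<Sum>d\<in>B4. f r a b c d)"
    by (rule sum.cong[OF refl], rule sum.swap)
  also have "\<dots> = (\<Sum>a\<in>B1. \<Sum>b\<in>B2. \<Sum>c\<in>B3. \<Sum>r\<in>A. \<Sum>d\<in>B4. f r a b c d)"
    apply (rule sum.cong[OF refl]) apply (rule sum.cong[OF refl]) by (rule sum.swap)
  also have "\<dots> = (\<Sum>a\<in>B1. \<Sum>b\<in>B2. \<Sum>c\<in>B3. \<Sum>d\<in>B4. \<Sum>r\<in>A. f r a b c d)"
    apply (rule sum.cong[OF refl]) apply (rule sum.cong[OF refl]) apply (rule sum.cong[OF refl]) by (rule sum.swap)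
  finally show ?thesis .
qed

definition TrR :: "nat \<Rightarrow> nat \<Rightarrow> complex mat \<Rightarrow> complex mat" where
  "TrR n R \<rho> = mat n n (\<lambda>(u,v). \<Sum>r<R. \<rho> $$ (u*R+r, v*R+r))"

definition TrL :: "nat \<Rightarrow> nat \<Rightarrow> complex mat \<Rightarrow> complex mat" where
  "TrL L m \<rho> = mat m m (\<lambda>(u,v). \<Sum>l<L. \<rho> $$ (l*m+u, l*m+v))"

lemma TrR_carrier: "TrR n R \<rho> \<in> carrier_mat n n" by (simp add: TrR_def)
lemma TrL_carrier: "TrL L m \<rho> \<in> carrier_mat m m" by (simp add: TrL_def)

lemma TrR_conj:
  assumes X: "X \<in> carrier_mat n n" and C: "unitary_op R C" and r: "\<rho> \<in> carrier_mat (n*R) (n*R)"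
  shows "TrR n R (kron X C * \<rho> * adj (kron X C)) = X * TrR n R \<rho> * adj X"
proof (rule eq_matI)
  have Cc: "C \<in> carrier_mat R R" and CC: "adj C * C = 1\<^sub>m R" using C by (auto simp: unitary_op_def)
  have G: "kron X C \<in> carrier_mat (n*R) (n*R)" using kron_carrier[OF X Cc] .
  fix u v assume "u < dim_row (X * TrR n R \<rho> * adj X)" "v < dim_col (X * TrR n R \<rho> * adj X)"
  then have u: "u < n" and v: "v < n" using X by auto
  let ?F = "\<lambda>r k1 r1 k2 r2. X $$ (u,k1) * C $$ (r,r1) * \<rho> $$ (k1*R+r1, k2*R+r2) * cnj (X $$ (v,k2) * C $$ (r,r2))"
  have E1: "(kron X C * \<rho> * adj (kron X C)) $$ (u*R+r, v*R+r) =
     (\<Sum>k1<n. \<Sum>r1<R. \<Sum>k2<n. \<Sum>r2<R. ?F r k1 r1 k2 r2)" if rR: "r < R" for r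
  proof -
    have "(kron X C * \<rho> * adj (kron X C)) $$ (u*R+r, v*R+r) =
      (\<Sum>k'<n*R. \<Sum>k<n*R. kron X C $$ (u*R+r,k') * \<rho> $$ (k',k) * cnj (kron X C $$ (v*R+r,k)))"
      by (rule Dentry[OF G r]) (use u v rR idx_bound in auto)
    also have "\<dots> = (\<Sum>k1<n. \<Sum>r1<R. \<Sum>k2<n. \<Sum>r2<R. kron X C $$ (u*R+r,k1*R+r1) * \<rho> $$ (k1*R+r1,k2*R+r2) * cnj (kron X C $$ (v*R+r,k2*R+r2)))"
      by (simp only: sum_split_mult)
    also have "\<dots> = (\<Sum>k1<n. \<Sum>r1<R. \<Sum>k2<n. \<Sum>r2<R. ?F r k1 r1 k2 r2)"
      by (intro sum.cong refl) (simp add: kron_entry2[OF X Cc] u v rR)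
    finally show ?thesis .
  qed
  have "TrR n R (kron X C * \<rho> * adj (kron X C)) $$ (u,v) = (\<Sum>r<R. (kron X C * \<rho> * adj (kron X C)) $$ (u*R+r, v*R+r))"
    using u v by (simp add: TrR_def)
  also have "\<dots> = (\<Sum>r<R. \<Sum>k1<n. \<Sum>r1<R. \<Sum>k2<n. \<Sum>r2<R. ?F r k1 r1 k2 r2)"
    by (rule sum.cong[OF refl]) (simp add: E1)
  also have "\<dots> = (\<Sum>k1<n. \<Sum>r1<R. \<Sum>k2<n. \<Sum>r2<R. \<Sum>r<R. ?F r k1 r1 k2 r2)"
    by (rule sum_push4)
  also have "\<dots> = (\<Sum>k1<n. \<Sum>r1<R. \<Sum>k2<n. \<Sum>r2<R.
        X $$ (u,k1) * \<rho> $$ (k1*R+r1, k2*R+r2) * cnj (X $$ (v,k2)) * (if r2 = r1 then 1 else 0))"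
  proof (intro sum.cong refl)
    fix k1 r1 k2 r2 assume r1: "r1 \<in> {..<R}" and r2: "r2 \<in> {..<R}"
    have "(\<Sum>r<R. ?F r k1 r1 k2 r2) = X $$ (u,k1) * \<rho> $$ (k1*R+r1, k2*R+r2) * cnj (X $$ (v,k2)) * (\<Sum>r<R. adj C $$ (r2,r) * C $$ (r,r1))"
      using Cc r1 r2 by (simp add: sum_distrib_left mult_ac)
    also have "(\<Sum>r<R. adj C $$ (r2,r) * C $$ (r,r1)) = (adj C * C) $$ (r2,r1)"
      by (rule mult_entry[symmetric]) (use Cc r1 r2 in auto)
    also have "\<dots> = (if r2 = r1 then 1 else 0)" using CC r1 r2 by simp
    finally show "(\<Sum>r<R. ?F r k1 r1 k2 r2) = X $$ (u,k1) * \<rho> $$ (k1*R+r1, k2*R+r2) * cnj (X $$ (v,k2)) * (if r2 = r1 then 1 else 0)" .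
  qed
  also have "\<dots> = (\<Sum>k1<n. \<Sum>r1<R. \<Sum>k2<n. X $$ (u,k1) * \<rho> $$ (k1*R+r1, k2*R+r1) * cnj (X $$ (v,k2)))"
    by (intro sum.cong refl) (simp add: if_distrib cong: if_cong)
  also have "\<dots> = (\<Sum>k1<n. \<Sum>k2<n. \<Sum>r1<R. X $$ (u,k1) * \<rho> $$ (k1*R+r1, k2*R+r1) * cnj (X $$ (v,k2)))"
    by (rule sum.cong[OF refl], rule sum.swap)
  also have "\<dots> = (X * TrR n R \<rho> * adj X) $$ (u,v)"
  proof -
    have "(X * TrR n R \<rho> * adj X) $$ (u,v) = (\<Sum>k1<n. \<Sum>k2<n. X $$ (u,k1) * TrR n R \<rho> $$ (k1,k2) * cnj (X $$ (v,k2)))"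
    proof -
      have "(X * TrR n R \<rho> * adj X) $$ (u,v) = (\<Sum>k2<n. (X * TrR n R \<rho>) $$ (u,k2) * adj X $$ (k2,v))"
        by (rule mult_entry) (use X u v TrR_carrier[of n R \<rho>] in auto)
      also have "\<dots> = (\<Sum>k2<n. (\<Sum>k1<n. X $$ (u,k1) * TrR n R \<rho> $$ (k1,k2)) * cnj (X $$ (v,k2)))"
      proof (rule sum.cong[OF refl])
        fix k2 assume k2: "k2 \<in> {..<n}"
        have "(X * TrR n R \<rho>) $$ (u,k2) = (\<Sum>k1<n. X $$ (u,k1) * TrR n R \<rho> $$ (k1,k2))"
          by (rule mult_entry) (use X u k2 TrR_carrier[of n R \<rho>] in auto)
        then show "(X * TrR n R \<rho>) $$ (u,k2) * adj X $$ (k2,v) = (\<Sum>k1<n. X $$ (u,k1) * TrR n R \<rho> $$ (k1,k2)) * cnj (X $$ (v,k2))"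
          using X k2 v by simp
      qed
      also have "\<dots> = (\<Sum>k2<n. \<Sum>k1<n. X $$ (u,k1) * TrR n R \<rho> $$ (k1,k2) * cnj (X $$ (v,k2)))"
        by (simp add: sum_distrib_right)
      also have "\<dots> = (\<Sum>k1<n. \<Sum>k2<n. X $$ (u,k1) * TrR n R \<rho> $$ (k1,k2) * cnj (X $$ (v,k2)))"
        by (rule sum.swap)
      finally show ?thesis .
    qed
    also have "\<dots> = (\<Sum>k1<n. \<Sum>k2<n. \<Sum>r1<R. X $$ (u,k1) * \<rho> $$ (k1*R+r1, k2*R+r1) * cnj (X $$ (v,k2)))"
      by (intro sum.cong refl) (simp add: TrR_def sum_distrib_left sum_distrib_right)
    finally show ?thesis by simp
  qed
  finally show "TrR n R (kron X C * \<rho> * adj (kron X C)) $$ (u,v) = (X * TrR n R \<rho> * adj X) $$ (u,v)" .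
qed (use X in \<open>auto simp: TrR_def\<close>)

lemma TrL_conj:
  assumes A: "unitary_op L A" and Y: "Y \<in> carrier_mat m m" and r: "\<rho> \<in> carrier_mat (L*m) (L*m)"
  shows "TrL L m (kron A Y * \<rho> * adj (kron A Y)) = Y * TrL L m \<rho> * adj Y"
proof (rule eq_matI)
  have Ac: "A \<in> carrier_mat L L" and AA: "adj A * A = 1\<^sub>m L" using A by (auto simp: unitary_op_def)
  have G: "kron A Y \<in> carrier_mat (L*m) (L*m)" using kron_carrier[OF Ac Y] .
  fix u v assume "u < dim_row (Y * TrL L m \<rho> * adj Y)" "v < dim_col (Y * TrL L m \<rho> * adj Y)"
  then have u: "u < m" and v: "v < m" using Y by auto
  let ?F = "\<lambda>l k1 a1 k2 a2. A $$ (l,k1) * Y $$ (u,a1) * \<rho> $$ (k1*m+a1, k2*m+a2) * cnj (A $$ (l,k2) * Y $$ (v,a2))"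
  have E1: "(kron A Y * \<rho> * adj (kron A Y)) $$ (l*m+u, l*m+v) =
     (\<Sum>k1<L. \<Sum>a1<m. \<Sum>k2<L. \<Sum>a2<m. ?F l k1 a1 k2 a2)" if lL: "l < L" for l
  proof -
    have "(kron A Y * \<rho> * adj (kron A Y)) $$ (l*m+u, l*m+v) =
      (\<Sum>k'<L*m. \<Sum>k<L*m. kron A Y $$ (l*m+u,k') * \<rho> $$ (k',k) * cnj (kron A Y $$ (l*m+v,k)))"
      by (rule Dentry[OF G r]) (use u v lL idx_bound in auto)
    also have "\<dots> = (\<Sum>k1<L. \<Sum>a1<m. \<Sum>k2<L. \<Sum>a2<m. kron A Y $$ (l*m+u,k1*m+a1) * \<rho> $$ (k1*m+a1,k2*m+a2) * cnj (kron A Y $$ (l*m+v,k2*m+a2)))"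
      by (simp only: sum_split_mult)
    also have "\<dots> = (\<Sum>k1<L. \<Sum>a1<m. \<Sum>k2<L. \<Sum>a2<m. ?F l k1 a1 k2 a2)"
      by (intro sum.cong refl) (simp add: kron_entry2[OF Ac Y] u v lL)
    finally show ?thesis .
  qed
  have "TrL L m (kron A Y * \<rho> * adj (kron A Y)) $$ (u,v) = (\<Sum>l<L. (kron A Y * \<rho> * adj (kron A Y)) $$ (l*m+u, l*m+v))"
    using u v by (simp add: TrL_def)
  also have "\<dots> = (\<Sum>l<L. \<Sum>k1<L. \<Sum>a1<m. \<Sum>k2<L. \<Sum>a2<m. ?F l k1 a1 k2 a2)"
    by (rule sum.cong[OF refl]) (simp add: E1)
  also have "\<dots> = (\<Sum>k1<L. \<Sum>a1<m. \<Sum>k2<L. \<Sum>a2<m. \<Sum>l<L. ?F l k1 a1 k2 a2)"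
    by (rule sum_push4)
  also have "\<dots> = (\<Sum>k1<L. \<Sum>a1<m. \<Sum>k2<L. \<Sum>a2<m.
        Y $$ (u,a1) * \<rho> $$ (k1*m+a1, k2*m+a2) * cnj (Y $$ (v,a2)) * (if k2 = k1 then 1 else 0))"
  proof (intro sum.cong refl)
    fix k1 a1 k2 a2 assume k1: "k1 \<in> {..<L}" and k2: "k2 \<in> {..<L}"
    have "(\<Sum>l<L. ?F l k1 a1 k2 a2) = Y $$ (u,a1) * \<rho> $$ (k1*m+a1, k2*m+a2) * cnj (Y $$ (v,a2)) * (\<Sum>l<L. adj A $$ (k2,l) * A $$ (l,k1))"
      using Ac k1 k2 by (simp add: sum_distrib_left mult_ac)
    also have "(\<Sum>l<L. adj A $$ (k2,l) * A $$ (l,k1)) = (adj A * A) $$ (k2,k1)"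
      by (rule mult_entry[symmetric]) (use Ac k1 k2 in auto)
    also have "\<dots> = (if k2 = k1 then 1 else 0)" using AA k1 k2 by simp
    finally show "(\<Sum>l<L. ?F l k1 a1 k2 a2) = Y $$ (u,a1) * \<rho> $$ (k1*m+a1, k2*m+a2) * cnj (Y $$ (v,a2)) * (if k2 = k1 then 1 else 0)" .
  qed
  also have "\<dots> = (\<Sum>k1<L. \<Sum>a1<m. \<Sum>a2<m. \<Sum>k2<L.
        Y $$ (u,a1) * \<rho> $$ (k1*m+a1, k2*m+a2) * cnj (Y $$ (v,a2)) * (if k2 = k1 then 1 else 0))"
    apply (rule sum.cong[OF refl]) apply (rule sum.cong[OF refl]) by (rule sum.swap)
  also have "\<dots> = (\<Sum>k1<L. \<Sum>a1<m. \<Sum>a2<m. Y $$ (u,a1) * \<rho> $$ (k1*m+a1, k1*m+a2) * cnj (Y $$ (v,a2)))"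
    by (intro sum.cong refl) (simp add: if_distrib cong: if_cong)
  also have "\<dots> = (Y * TrL L m \<rho> * adj Y) $$ (u,v)"
  proof -
    have "(Y * TrL L m \<rho> * adj Y) $$ (u,v) = (\<Sum>a1<m. \<Sum>a2<m. Y $$ (u,a1) * TrL L m \<rho> $$ (a1,a2) * cnj (Y $$ (v,a2)))"
    proof -
      have "(Y * TrL L m \<rho> * adj Y) $$ (u,v) = (\<Sum>a2<m. (Y * TrL L m \<rho>) $$ (u,a2) * adj Y $$ (a2,v))"
        by (rule mult_entry) (use Y u v TrL_carrier[of L m \<rho>] in auto)
      also have "\<dots> = (\<Sum>a2<m. (\<Sum>a1<m. Y $$ (u,a1) * TrL L m \<rho> $$ (a1,a2)) * cnj (Y $$ (v,a2)))"
      proof (rule sum.cong[OF refl])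
        fix a2 assume a2: "a2 \<in> {..<m}"
        have "(Y * TrL L m \<rho>) $$ (u,a2) = (\<Sum>a1<m. Y $$ (u,a1) * TrL L m \<rho> $$ (a1,a2))"
          by (rule mult_entry) (use Y u a2 TrL_carrier[of L m \<rho>] in auto)
        then show "(Y * TrL L m \<rho>) $$ (u,a2) * adj Y $$ (a2,v) = (\<Sum>a1<m. Y $$ (u,a1) * TrL L m \<rho> $$ (a1,a2)) * cnj (Y $$ (v,a2))"
          using Y a2 v by simp
      qed
      also have "\<dots> = (\<Sum>a2<m. \<Sum>a1<m. Y $$ (u,a1) * TrL L m \<rho> $$ (a1,a2) * cnj (Y $$ (v,a2)))"
        by (simp add: sum_distrib_right)
      also have "\<dots> = (\<Sum>a1<m. \<Sum>a2<m. Y $$ (u,a1) * TrL L m \<rho> $$ (a1,a2) * cnj (Y $$ (v,a2)))"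
        by (rule sum.swap)
      finally show ?thesis .
    qed
    also have "\<dots> = (\<Sum>a1<m. \<Sum>a2<m. \<Sum>k1<L. Y $$ (u,a1) * \<rho> $$ (k1*m+a1, k1*m+a2) * cnj (Y $$ (v,a2)))"
      by (intro sum.cong refl) (simp add: TrL_def sum_distrib_left sum_distrib_right)
    also have "\<dots> = (\<Sum>a1<m. \<Sum>k1<L. \<Sum>a2<m. Y $$ (u,a1) * \<rho> $$ (k1*m+a1, k1*m+a2) * cnj (Y $$ (v,a2)))"
      by (rule sum.cong[OF refl], rule sum.swap)
    also have "\<dots> = (\<Sum>k1<L. \<Sum>a1<m. \<Sum>a2<m. Y $$ (u,a1) * \<rho> $$ (k1*m+a1, k1*m+a2) * cnj (Y $$ (v,a2)))"
      by (rule sum.swap)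
    finally show ?thesis by simp
  qed
  finally show "TrL L m (kron A Y * \<rho> * adj (kron A Y)) $$ (u,v) = (Y * TrL L m \<rho> * adj Y) $$ (u,v)" .
qed (use Y in \<open>auto simp: TrL_def\<close>)

lemma Red_eq: "Red j ds \<rho> = TrL (prod_list (take j ds)) (ds!j) (TrR (prod_list (take j ds) * ds!j) (prod_list (drop (Suc j) ds)) \<rho>)"
proof (rule eq_matI)
  fix a b assume "a < dim_row (TrL (prod_list (take j ds)) (ds!j) (TrR (prod_list (take j ds) * ds!j) (prod_list (drop (Suc j) ds)) \<rho>))"
    "b < dim_col (TrL (prod_list (take j ds)) (ds!j) (TrR (prod_list (take j ds) * ds!j) (prod_list (drop (Suc j) ds)) \<rho>))"
  then have a: "a < ds!j" and b: "b < ds!j" by (auto simp: TrL_def)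
  show "Red j ds \<rho> $$ (a,b) = TrL (prod_list (take j ds)) (ds!j) (TrR (prod_list (take j ds) * ds!j) (prod_list (drop (Suc j) ds)) \<rho>) $$ (a,b)"
    using a b by (auto simp: Red_def Let_def TrL_def TrR_def idx_bound intro!: sum.cong)
qed (auto simp: Red_def Let_def TrL_def)

lemma Red3_conj:
  assumes A: "unitary_op L A" and B: "B \<in> carrier_mat d d" and C: "unitary_op R C"
    and r: "\<rho> \<in> carrier_mat (L*d*R) (L*d*R)"
  shows "TrL L d (TrR (L*d) R (kron (kron A B) C * \<rho> * adj (kron (kron A B) C))) = B * TrL L d (TrR (L*d) R \<rho>) * adj B"
proof -
  have Ac: "A \<in> carrier_mat L L" using A by (simp add: unitary_op_def)
  have "TrR (L*d) R (kron (kron A B) C * \<rho> * adj (kron (kron A B) C)) = kron A B * TrR (L*d) R \<rho> * adj (kron A B)"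
    by (rule TrR_conj[OF kron_carrier[OF Ac B] C r])
  then show ?thesis using TrL_conj[OF A B TrR_carrier] by simp
qed

abbreviation step :: "form list \<Rightarrow> form list" where "step l \<equiv> concat (map expand l)"

lemma level_1: "level \<alpha> 1 = [\<alpha>]" by (simp add: level_def)
lemma level_Suc0: "level \<alpha> (Suc 0) = [\<alpha>]" by (simp add: level_def)

lemma level_Suc: "1 \<le> i \<Longrightarrow> level \<alpha> (Suc i) = step (level \<alpha> i)"
  unfolding level_def by (cases i) auto

lemma concat_map_concat: "concat (map g (concat (map h l))) = concat (map (\<lambda>x. concat (map g (h x))) l)"
  by (induction l) auto

lemma funpow_step: "(step ^^ k) l = concat (map (\<lambda>x. (step ^^ k) [x]) l)"
proof (induction k arbitrary: l)
  case 0 then show ?case by (induction l) auto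
next
  case (Suc k)
  have "(step ^^ Suc k) l = (step ^^ k) (step l)" by (simp add: funpow_Suc_right del: funpow.simps)
  also have "\<dots> = concat (map (\<lambda>x. (step ^^ k) [x]) (step l))" by (rule Suc)
  also have "\<dots> = concat (map (\<lambda>x. concat (map (\<lambda>y. (step ^^ k) [y]) (expand x))) l)"
    by (rule concat_map_concat)
  also have "\<dots> = concat (map (\<lambda>x. (step ^^ Suc k) [x]) l)"
    by (simp add: funpow_Suc_right Suc[symmetric] del: funpow.simps)
  finally show ?case .
qed

lemma level_Suc_expand: "1 \<le> i \<Longrightarrow> level \<alpha> (Suc i) = concat (map (\<lambda>x. level x i) (expand \<alpha>))"
proof -
  assume i: "1 \<le> i"
  have "level \<alpha> (Suc i) = (step ^^ (i-1)) (step [\<alpha>])"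
    using i by (cases i) (simp_all add: level_def funpow_Suc_right del: funpow.simps)
  also have "\<dots> = concat (map (\<lambda>x. level x i) (expand \<alpha>))"
    by (subst funpow_step) (simp add: level_def)
  finally show ?thesis .
qed

lemma At_pos: "1 \<le> At x" by (induction x) auto
lemma height_pos: "1 \<le> height x" by (induction x) auto

lemma expand_atomic: "atomic x \<Longrightarrow> expand x = [x]" by (cases x) auto
lemma expand_height: "\<not> atomic x \<Longrightarrow> y \<in> set (expand x) \<Longrightarrow> height y < height x"
  by (cases x) auto
lemma nonatomic_height: "\<not> atomic x \<Longrightarrow> 2 \<le> height x"
proof -
  have hp: "0 < height y" for y using height_pos[of y] by simp
  assume "\<not> atomic x" then show ?thesis by (cases x) (auto simp: hp Suc_le_eq less_max_iff_disj)
qed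

lemma height_bound: "1 \<le> i \<Longrightarrow> y \<in> set (level \<gamma> i) \<Longrightarrow> \<not> atomic y \<Longrightarrow> i - 1 + height y \<le> height \<gamma>"
proof (induction i arbitrary: y rule: nat_induct_at_least)
  case base then show ?case by (simp add: level_1 level_Suc0)
next
  case (Suc i)
  from Suc.prems(1) Suc.hyps(1) obtain x where x: "x \<in> set (level \<gamma> i)" and y: "y \<in> set (expand x)"
    by (auto simp: level_Suc)
  have xa: "\<not> atomic x"
  proof
    assume "atomic x" then have "y = x" using y by (simp add: expand_atomic)
    with Suc.prems(2) \<open>atomic x\<close> show False by simp
  qed
  have "height y < height x" using expand_height[OF xa y] .
  moreover have "i - 1 + height x \<le> height \<gamma>" using Suc.IH[OF x xa] .
  ultimately show ?case using Suc.hyps by simp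
qed

definition D :: "form \<Rightarrow> nat" where "D x = 2 ^ At x"

lemma prod_expand: "prod_list (map D (expand x)) = D x"
  by (cases x) (auto simp: D_def power_add)

lemma prod_step: "prod_list (map D (step l)) = prod_list (map D l)"
  by (induction l) (auto simp: prod_expand)

lemma prod_level: "1 \<le> i \<Longrightarrow> prod_list (map D (level \<gamma> i)) = D \<gamma>"
proof (induction i rule: nat_induct_at_least)
  case base then show ?case by (simp add: level_1 level_Suc0)
next
  case (Suc i) then show ?case by (simp add: level_Suc prod_step)
qed

lemma sub_occ: "\<beta> \<in> subformulas \<gamma> \<Longrightarrow> \<exists>i j. occ \<gamma> i j \<beta>"
proof (induction \<gamma>)
  case (Neg b)
  show ?case
  proof (cases "\<beta> = Neg b")
    case True then show ?thesis by (rule_tac x=1 in exI, rule_tac x=0 in exI) (simp add: occ_def level_1 level_Suc0 height_pos)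
  next
    case False
    then obtain i j where o: "occ b i j \<beta>" using Neg by auto
    then have "occ (Neg b) (Suc i) j \<beta>" by (simp add: occ_def level_Suc_expand)
    then show ?thesis by blast
  qed
next
  case (SqId b)
  show ?case
  proof (cases "\<beta> = SqId b")
    case True then show ?thesis by (rule_tac x=1 in exI, rule_tac x=0 in exI) (simp add: occ_def level_1 level_Suc0 height_pos)
  next
    case False
    then obtain i j where o: "occ b i j \<beta>" using SqId by auto
    then have "occ (SqId b) (Suc i) j \<beta>" by (simp add: occ_def level_Suc_expand)
    then show ?thesis by blast
  qed
next
  case (SqNeg b)
  show ?case
  proof (cases "\<beta> = SqNeg b")
    case True then show ?thesis by (rule_tac x=1 in exI, rule_tac x=0 in exI) (simp add: occ_def level_1 level_Suc0 height_pos)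
  next
    case False
    then obtain i j where o: "occ b i j \<beta>" using SqNeg by auto
    then have "occ (SqNeg b) (Suc i) j \<beta>" by (simp add: occ_def level_Suc_expand)
    then show ?thesis by blast
  qed
next
  case (Xor b c)
  show ?case
  proof (cases "\<beta> = Xor b c")
    case True then show ?thesis by (rule_tac x=1 in exI, rule_tac x=0 in exI) (simp add: occ_def level_1 level_Suc0 height_pos)
  next
    case False
    then have "\<beta> \<in> subformulas b \<or> \<beta> \<in> subformulas c" using Xor by auto
    then show ?thesis
    proof
      assume "\<beta> \<in> subformulas b"
      then obtain i j where o: "occ b i j \<beta>" using Xor by auto
      then have "occ (Xor b c) (Suc i) j \<beta>" by (auto simp: occ_def level_Suc_expand nth_append)
      then show ?thesis by blast
    next
      assume "\<beta> \<in> subformulas c"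
      then obtain i j where o: "occ c i j \<beta>" using Xor by auto
      then have "occ (Xor b c) (Suc i) (length (level b i) + j) \<beta>" by (auto simp: occ_def level_Suc_expand nth_append)
      then show ?thesis by blast
    qed
  qed
next
  case (Toff b c d)
  show ?case
  proof (cases "\<beta> = Toff b c d")
    case True then show ?thesis by (rule_tac x=1 in exI, rule_tac x=0 in exI) (simp add: occ_def level_1 level_Suc0 height_pos)
  next
    case False
    then have "\<beta> \<in> subformulas b \<or> \<beta> \<in> subformulas c \<or> \<beta> \<in> subformulas d" using Toff by auto
    then show ?thesis
    proof (elim disjE)
      assume "\<beta> \<in> subformulas b"
      then obtain i j where o: "occ b i j \<beta>" using Toff by auto
      then have "occ (Toff b c d) (Suc i) j \<beta>" by (auto simp: occ_def level_Suc_expand nth_append)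
      then show ?thesis by blast
    next
      assume "\<beta> \<in> subformulas c"
      then obtain i j where o: "occ c i j \<beta>" using Toff by auto
      then have "occ (Toff b c d) (Suc i) (length (level b i) + j) \<beta>" by (auto simp: occ_def level_Suc_expand nth_append)
      then show ?thesis by blast
    next
      assume "\<beta> \<in> subformulas d"
      then obtain i j where o: "occ d i j \<beta>" using Toff by auto
      then have "occ (Toff b c d) (Suc i) (length (level b i) + length (level c i) + j) \<beta>" by (auto simp: occ_def level_Suc_expand nth_append)
      then show ?thesis by blast
    qed
  qed
qed (auto simp: occ_def level_1 level_Suc0)

lemma unitary_gate_item:
  assumes T: "unitary_op 2 T"
  shows "unitary_op (D x) (gate_item T x)"
proof (cases x)
  case (Neg b) then show ?thesis
    using At_pos[of b] by (auto simp: D_def intro!: unitary_conjT[OF T] unitary_NOT)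
next
  case (SqId b) then show ?thesis
    using At_pos[of b] by (auto simp: D_def intro!: unitary_conjT[OF T] unitary_SqrtI)
next
  case (SqNeg b) then show ?thesis
    using At_pos[of b] by (auto simp: D_def intro!: unitary_conjT[OF T] unitary_SqrtNOT)
next
  case (Xor b c) then show ?thesis
    using At_pos[of c] by (auto simp: D_def intro!: unitary_conjT[OF T] unitary_XOR)
next
  case (Toff b c d) then show ?thesis
    using At_pos[of d] by (auto simp: D_def intro!: unitary_conjT[OF T] unitary_Toffoli)
qed (auto simp: D_def unitary_one)

lemma unitary_kron_list:
  assumes T: "unitary_op 2 T"
  shows "unitary_op (prod_list (map D l)) (kron_list (map (gate_item T) l))"
proof (induction l)
  case Nil then show ?case by (simp add: unitary_one)
next
  case (Cons x l) then show ?case by (simp add: unitary_kron unitary_gate_item[OF T])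
qed

lemma hol_dens: "holistic T Hol \<Longrightarrow> 1 \<le> i \<Longrightarrow> i \<le> height \<alpha> \<Longrightarrow> density (2 ^ At \<alpha>) (Hol \<alpha> i)"
proof -
  assume H: "holistic T Hol" and a: "1 \<le> i" "i \<le> height \<alpha>"
  have "\<forall>i. 1 \<le> i \<and> i \<le> height \<alpha> \<longrightarrow> density (2 ^ At \<alpha>) (Hol \<alpha> i)"
    by (rule conjunct1[OF spec[OF H[unfolded holistic_def], of \<alpha>]])
  then show ?thesis using a by blast
qed

lemma hol_gate: "holistic T Hol \<Longrightarrow> 1 \<le> i \<Longrightarrow> i < height \<alpha> \<Longrightarrow> Hol \<alpha> i = Dgate (level_gate T \<alpha> i) (Hol \<alpha> (Suc i))"
proof -
  assume H: "holistic T Hol" and a: "1 \<le> i" "i < height \<alpha>"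
  have "\<forall>i. 1 \<le> i \<and> i < height \<alpha> \<longrightarrow> Hol \<alpha> i = Dgate (level_gate T \<alpha> i) (Hol \<alpha> (Suc i))"
    by (rule conjunct1[OF conjunct2[OF spec[OF H[unfolded holistic_def], of \<alpha>]]])
  then show ?thesis using a by blast
qed

lemma hol_norm: "holistic T Hol \<Longrightarrow> occ \<alpha> i j \<beta> \<Longrightarrow> occ \<alpha> i' j' \<beta> \<Longrightarrow> ctx Hol \<alpha> i j = ctx Hol \<alpha> i' j'"
proof -
  assume H: "holistic T Hol" and a: "occ \<alpha> i j \<beta>" "occ \<alpha> i' j' \<beta>"
  have "\<forall>\<beta> i j i' j'. occ \<alpha> i j \<beta> \<and> occ \<alpha> i' j' \<beta> \<longrightarrow> ctx Hol \<alpha> i j = ctx Hol \<alpha> i' j'"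
    by (rule conjunct1[OF conjunct2[OF conjunct2[OF spec[OF H[unfolded holistic_def], of \<alpha>]]]])
  then show ?thesis using a by blast
qed

lemma hol_meaning_occ:
  assumes H: "holistic T Hol" and o: "occ \<gamma> i j \<beta>"
  shows "hol_meaning Hol \<gamma> \<beta> = ctx Hol \<gamma> i j"
  unfolding hol_meaning_def
proof (rule someI2[where a="ctx Hol \<gamma> i j"])
  show "\<exists>i' j'. occ \<gamma> i' j' \<beta> \<and> ctx Hol \<gamma> i j = ctx Hol \<gamma> i' j'" using o by blast
next
  fix M assume "\<exists>i' j'. occ \<gamma> i' j' \<beta> \<and> M = ctx Hol \<gamma> i' j'"
  then obtain i' j' where "occ \<gamma> i' j' \<beta>" "M = ctx Hol \<gamma> i' j'" by blast
  then show "M = ctx Hol \<gamma> i j" using hol_norm[OF H o] by simp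
qed

lemma key:
  assumes T: "truth_perspective T" and H: "holistic T Hol"
    and e: "expand b' = [b]" and na: "\<not> atomic b'" and sub: "b' \<in> subformulas \<gamma>"
  shows "hol_meaning Hol \<gamma> b' = Dgate (gate_item T b') (hol_meaning Hol \<gamma> b)"
proof -
  have TU: "unitary_op 2 T" using T by (simp add: truth_perspective_def)
  obtain i j where o: "occ \<gamma> i j b'" using sub_occ[OF sub] by blast
  define l where "l = level \<gamma> i"
  have i1: "1 \<le> i" and jl: "j < length l" and lj: "l ! j = b'" using o by (auto simp: occ_def l_def)
  have "i - 1 + height b' \<le> height \<gamma>"
    using height_bound[OF i1 _ na] jl lj by (metis l_def nth_mem)
  then have ih: "i < height \<gamma>" using nonatomic_height[OF na] i1 by simp
  define pre where "pre = take j l"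
  define post where "post = drop (Suc j) l"
  have ldec: "l = pre @ b' # post" using id_take_nth_drop[OF jl] unfolding pre_def post_def lj .
  have Ab: "At b' = At b" using e na by (cases b') auto
  define L where "L = prod_list (map D pre)"
  define d where "d = D b"
  define R where "R = prod_list (map D post)"
  define \<rho> where "\<rho> = Hol \<gamma> (Suc i)"
  have l': "level \<gamma> (Suc i) = step pre @ b # step post"
    using i1 by (simp add: level_Suc l_def[symmetric] ldec e)
  define j' where "j' = length (step pre)"
  have o': "occ \<gamma> (Suc i) j' b" using ih by (simp add: occ_def l' j'_def)
  have dens: "density (2 ^ At \<gamma>) \<rho>" unfolding \<rho>_def using hol_dens[OF H, of "Suc i" \<gamma>] ih by simp
  have "2 ^ At \<gamma> = prod_list (map D l)" using prod_level[OF i1] by (simp add: l_def D_def)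
  also have "\<dots> = L * d * R" by (simp add: ldec L_def d_def R_def D_def Ab)
  finally have r: "\<rho> \<in> carrier_mat (L*d*R) (L*d*R)" using dens by (simp add: density_def)
  have Hi: "Hol \<gamma> i = Dgate (level_gate T \<gamma> i) \<rho>" unfolding \<rho>_def by (rule hol_gate[OF H i1 ih])
  have LG: "level_gate T \<gamma> i = kron (kron (kron_list (map (gate_item T) pre)) (gate_item T b')) (kron_list (map (gate_item T) post))"
    by (simp add: level_gate_def l_def[symmetric] ldec kron_list_append kron_assoc)
  have UP: "unitary_op L (kron_list (map (gate_item T) pre))" unfolding L_def by (rule unitary_kron_list[OF TU])
  have UQ: "unitary_op R (kron_list (map (gate_item T) post))" unfolding R_def by (rule unitary_kron_list[OF TU])
  have Gc: "gate_item T b' \<in> carrier_mat d d"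
    using unitary_gate_item[OF TU, of b'] by (simp add: unitary_op_def d_def D_def Ab)
  have jp: "j = length (map D pre)" using jl by (simp add: pre_def)
  have ds: "map (\<lambda>b. 2 ^ At b) (level \<gamma> i) = map D pre @ d # map D post"
    by (simp add: l_def[symmetric] ldec D_def Ab d_def)
  have "ctx Hol \<gamma> i j = TrL L d (TrR (L*d) R (Hol \<gamma> i))"
    unfolding ctx_def ds Red_eq jp by (simp add: L_def R_def nth_append)
  also have "\<dots> = gate_item T b' * TrL L d (TrR (L*d) R \<rho>) * adj (gate_item T b')"
    unfolding Hi Dgate_def LG by (rule Red3_conj[OF UP Gc UQ r])
  finally have c1: "ctx Hol \<gamma> i j = Dgate (gate_item T b') (TrL L d (TrR (L*d) R \<rho>))"
    by (simp add: Dgate_def)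
  have jp': "j' = length (map D (step pre))" by (simp add: j'_def)
  have ds': "map (\<lambda>b. 2 ^ At b) (level \<gamma> (Suc i)) = map D (step pre) @ d # map D (step post)"
    by (simp add: l' D_def d_def)
  have c2: "ctx Hol \<gamma> (Suc i) j' = TrL L d (TrR (L*d) R \<rho>)"
    unfolding ctx_def ds' Red_eq jp' by (simp add: L_def R_def prod_step \<rho>_def nth_append)
  show ?thesis using hol_meaning_occ[OF H o] hol_meaning_occ[OF H o'] c1 c2 by simp
qed

theorem theorem4p8:
  fixes T :: "complex mat" and Hol :: "form \<Rightarrow> nat \<Rightarrow> complex mat"
    and \<gamma> \<beta> :: form
  assumes "truth_perspective T" and "holistic T Hol"
  shows "(Neg \<beta> \<in> subformulas \<gamma> \<longrightarrow>
            hol_meaning Hol \<gamma> (Neg \<beta>) =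
            Dgate (conjT T (At \<beta>) (NOT_gate (At \<beta>))) (hol_meaning Hol \<gamma> \<beta>))
       \<and> (SqId \<beta> \<in> subformulas \<gamma> \<longrightarrow>
            hol_meaning Hol \<gamma> (SqId \<beta>) =
            Dgate (conjT T (At \<beta>) (SqrtI_gate (At \<beta>))) (hol_meaning Hol \<gamma> \<beta>))
       \<and> (SqNeg \<beta> \<in> subformulas \<gamma> \<longrightarrow>
            hol_meaning Hol \<gamma> (SqNeg \<beta>) =
            Dgate (conjT T (At \<beta>) (SqrtNOT_gate (At \<beta>))) (hol_meaning Hol \<gamma> \<beta>))"
  using key[OF assms, of "Neg \<beta>" \<beta>] key[OF assms, of "SqId \<beta>" \<beta>] key[OF assms, of "SqNeg \<beta>" \<beta>]
  by simp

end
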